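(* Let $1\le p\le q$ be integers and $n=p+q$ (the case $G=Sp(p,q)$). Let $\mu=(a_1,\dots,a_p\mid b_1,\dots,b_q)\in\mathbb{Z}^n$ be $\Delta^+(\mathfrak{k},\mathfrak{t})$-dominant and u-large, and assume that $\mu-\beta$ is also $\Delta^+(\mathfrak{k},\mathfrak{t})$-dominant. Then $$\|\mu\|_{\mathrm{spin}}>\|\mu-\beta\|_{\mathrm{spin}}.$$ Equivalently: along any pencil $\{\mu_0+m\beta\mid m\in\mathbb{Z}_{\ge0}\}$ of $\Delta^+(\mathfrak{k},\mathfrak{t})$-dominant weights, the spin norm strictly increases at each step from $\mu-\beta$ to $\mu$ once $\mu$ is u-large.
   Context: Weights are vectors in $\mathbb{R}^n$ written $(x_1,\dots,x_p\mid y_1,\dots,y_q)$, with the standard inner product $\langle\cdot,\cdot\rangle$ and Euclidean norm $\|\cdot\|$. Put $\rho_c=(p,p-1,\dots,1\mid q,q-1,\dots,1)$ and $\beta=(1,0,\dots,0\mid 1,0,\dots,0)$. A weight is $\Delta^+(\mathfrak{k},\mathfrak{t})$-dominant if $x_1\ge\cdots\ge x_p\ge0$ and $y_1\ge\cdots\ge y_q\ge 0$. For $\nu\in\mathbb{Z}^n$, $\{\nu\}$ denotes the vector obtained by replacing every coordinate by its absolute value and then rearranging the first $p$ coordinates in decreasing order and the last $q$ coordinates in decreasing order; the $\mathfrak{k}$-value is $\|\nu\|_{\mathfrak{k}}:=\|\{\nu\}+\rho_c\|$. Let $\Omega_{p,q}$ be the set of $(x_1,\dots,x_p\mid y_1,\dots,y_q)\in\mathbb{Z}^n$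 with $q\ge x_1\ge\cdots\ge x_p\ge0$ and $y_j=\#\{i\mid q-x_i\ge j\}$ for $1\le j\le q$ (these are exactly the vectors $\rho_n^{(\ell)}=w\rho-\rho_c$, $\rho=(n,n-1,\dots,1)$, as $w$ runs over the Weyl group elements making $\Delta^+(\mathfrak{k},\mathfrak{t})\cup w\Delta^+(\mathfrak{p},\mathfrak{t})$ a positive system). The spin norm of a $\Delta^+(\mathfrak{k},\mathfrak{t})$-dominant $\nu\in\mathbb{Z}^n$ is $\|\nu\|_{\mathrm{spin}}:=\min_{\tau\in\Omega_{p,q}}\|\nu-\tau\|_{\mathfrak{k}}$. A dominant integral weight $\mu=(a_1,\dots,a_p\mid b_1,\dots,b_q)$ is called u-large (i.e. not in the unitarily small convex hull of Salamanca-Riba–Vogan) if there exist $0\le f\le p$ and $0\le g\le q$ with $\sum_{i=1}^f a_i+\sum_{j=1}^g b_j>2pq-2(p-f)(q-g)$; otherwise it is u-small. *)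

theory Defs
  imports "HOL-Analysis.Analysis"
begin

text \<open>A weight (x_1..x_p | y_1..y_q) in Z^n is represented as a pair of integer lists
  (x, y) with length x = p and length y = q.\<close>

type_synonym weight = "int list \<times> int list"

definition wminus :: "weight \<Rightarrow> weight \<Rightarrow> weight" where
  "wminus \<nu> \<tau> = (map2 (-) (fst \<nu>) (fst \<tau>), map2 (-) (snd \<nu>) (snd \<tau>))"

definition wplus :: "weight \<Rightarrow> weight \<Rightarrow> weight" where
  "wplus \<nu> \<tau> = (map2 (+) (fst \<nu>) (fst \<tau>), map2 (+) (snd \<nu>) (snd \<tau>))"

definition wnorm :: "weight \<Rightarrow> real" where
  "wnorm \<nu> = sqrt (real_of_int ((\<Sum>v\<leftarrow>fst \<nu>. v^2) + (\<Sum>v\<leftarrow>snd \<nu>. v^2)))"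

definition rho_c :: "nat \<Rightarrow> nat \<Rightarrow> weight" where
  "rho_c p q = (map int (rev [1..<p+1]), map int (rev [1..<q+1]))"

definition beta :: "nat \<Rightarrow> nat \<Rightarrow> weight" where
  "beta p q = (1 # replicate (p - 1) 0, 1 # replicate (q - 1) 0)"

definition kdominant :: "weight \<Rightarrow> bool" where
  "kdominant \<nu> \<longleftrightarrow> sorted_wrt (\<ge>) (fst \<nu>) \<and> (\<forall>v\<in>set (fst \<nu>). 0 \<le> v)
                    \<and> sorted_wrt (\<ge>) (snd \<nu>) \<and> (\<forall>v\<in>set (snd \<nu>). 0 \<le> v)"

definition brace :: "weight \<Rightarrow> weight" where
  "brace \<nu> = (rev (sort (map abs (fst \<nu>))), rev (sort (map abs (snd \<nu>))))"

definition knorm :: "nat \<Rightarrow> nat \<Rightarrow> weight \<Rightarrow> real" where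
  "knorm p q \<nu> = wnorm (wplus (brace \<nu>) (rho_c p q))"

definition Omega :: "nat \<Rightarrow> nat \<Rightarrow> weight set" where
  "Omega p q = {(x, y). length x = p \<and> sorted_wrt (\<ge>) x \<and> (\<forall>v\<in>set x. 0 \<le> v \<and> v \<le> int q)
      \<and> y = map (\<lambda>j. int (card {i. i < p \<and> int q - x ! i \<ge> int j})) [1..<q+1]}"

definition spin_norm :: "nat \<Rightarrow> nat \<Rightarrow> weight \<Rightarrow> real" where
  "spin_norm p q \<nu> = Min ((\<lambda>\<tau>. knorm p q (wminus \<nu> \<tau>)) ` Omega p q)"

definition u_large :: "nat \<Rightarrow> nat \<Rightarrow> weight \<Rightarrow> bool" where
  "u_large p q \<mu> \<longleftrightarrow> (\<exists>f\<le>p. \<exists>g\<le>q.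
      sum_list (take f (fst \<mu>)) + sum_list (take g (snd \<mu>))
        > 2 * int p * int q - 2 * (int p - int f) * (int q - int g))"

end

theory Submission
  imports Defs "HOL-Combinatorics.Permutations"
begin

definition srt :: "int list \<Rightarrow> int list" where
  "srt u = rev (sort (map abs u))"

definition topk :: "int list \<Rightarrow> nat \<Rightarrow> int" where
  "topk u k = (\<Sum>i<k. srt u ! i)"

definition sqs :: "int list \<Rightarrow> int" where
  "sqs u = (\<Sum>i<length u. (u!i)^2)"

definition blk :: "int list \<Rightarrow> int" where
  "blk u = (\<Sum>i<length u. (srt u ! i + int (length u - i))^2)"

lemma sorted_top:
  fixes w :: "int list"
  assumes "sorted_wrt (\<ge>) w"
  shows "J \<subseteq> {..<length w} \<Longrightarrow> card J = k \<Longrightarrow> (\<Sum>j\<in>J. w!j) \<le> (\<Sum>i<k. w!i)"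
proof (induction k arbitrary: J)
  case 0
  then have "J = {}" using finite_subset[OF 0(1)] by auto
  then show ?case by simp
next
  case (Suc k)
  have fin: "finite J" using finite_subset[OF Suc(2)] by auto
  have ne: "J \<noteq> {}" using Suc(3) by auto
  define m where "m = Max J"
  have mJ: "m \<in> J" using Max_in[OF fin ne] m_def by simp
  have J': "card (J - {m}) = k" using Suc(3) mJ fin by simp
  have IH: "(\<Sum>j\<in>J-{m}. w!j) \<le> (\<Sum>i<k. w!i)" using Suc.IH[OF _ J'] Suc.prems(1) by blast
  have "J \<subseteq> {..m}" using Max_ge[OF fin] m_def by auto
  then have "card J \<le> Suc m" using card_mono[of "{..m}" J] by simp
  then have km: "k \<le> m" using Suc(3) by simp
  have ml: "m < length w" using mJ Suc(2) by auto
  have "w!m \<le> w!k"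
  proof (cases "k = m")
    case False
    then show ?thesis using assms km ml unfolding sorted_wrt_iff_nth_less by auto
  qed simp
  have "(\<Sum>j\<in>J. w!j) = (\<Sum>j\<in>J-{m}. w!j) + w!m"
    using fin mJ by (simp add: sum.remove)
  also have "\<dots> \<le> (\<Sum>i<k. w!i) + w!k" using IH \<open>w!m \<le> w!k\<close> by simp
  finally show ?case by simp
qed

lemma srt_sorted: "sorted_wrt (\<ge>) (srt u)"
  unfolding srt_def sorted_wrt_rev using sorted_sort[of "map abs u"]
  by simp

lemma srt_len[simp]: "length (srt u) = length u"
  by (simp add: srt_def)

lemma srt_perm:
  "\<exists>\<pi>. \<pi> permutes {..<length u} \<and> (\<forall>i < length u. srt u ! i = \<bar>u ! \<pi> i\<bar>)"
proof -
  have "mset (srt u) = mset (map abs u)" by (simp add: srt_def)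
  then obtain \<pi> where p: "\<pi> permutes {..<length (map abs u)}" "permute_list \<pi> (map abs u) = srt u"
    by (rule mset_eq_permutation)
  have "\<And>i. i < length u \<Longrightarrow> srt u ! i = \<bar>u ! \<pi> i\<bar>"
  proof -
    fix i assume "i < length u"
    then have "srt u ! i = map abs u ! \<pi> i" using p permute_list_nth[of \<pi> "map abs u" i] by simp
    moreover have "\<pi> i < length u" using permutes_in_image[OF p(1)] \<open>i < length u\<close> by simp
    ultimately show "srt u ! i = \<bar>u ! \<pi> i\<bar>" by simp
  qed
  then show ?thesis using p(1) by (intro exI[of _ \<pi>]) simp
qed

lemma topk_ge:
  assumes "J \<subseteq> {..<length u}" "card J = k"
  shows "(\<Sum>j\<in>J. \<bar>u!j\<bar>) \<le> topk u k"
proof -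
  obtain \<pi> where p: "\<pi> permutes {..<length u}" "\<And>i. i < length u \<Longrightarrow> srt u ! i = \<bar>u ! \<pi> i\<bar>"
    using srt_perm[of u] by blast
  define I where "I = {i. i < length u \<and> \<pi> i \<in> J}"
  have inj: "inj_on \<pi> I" using p(1) permutes_inj_on by blast
  have img: "\<pi> ` I = J"
  proof
    show "\<pi> ` I \<subseteq> J" unfolding I_def by auto
    show "J \<subseteq> \<pi> ` I"
    proof
      fix j assume "j \<in> J"
      then have jl: "j < length u" using assms(1) by auto
      define i where "i = inv \<pi> j"
      have "\<pi> i = j" unfolding i_def using permutes_inverses(1)[OF p(1)] by simp
      moreover have "i \<in> {..<length u}" unfolding i_def
        using permutes_in_image[OF permutes_inv[OF p(1)]] jl by simp
      ultimately have "\<pi> i = j" "i \<in> {..<length u}" by auto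
      then show "j \<in> \<pi> ` I" unfolding I_def using \<open>j \<in> J\<close> by auto
    qed
  qed
  have cI: "card I = k" using card_image[OF inj] img assms(2) by simp
  have "(\<Sum>j\<in>J. \<bar>u!j\<bar>) = (\<Sum>i\<in>I. \<bar>u!(\<pi> i)\<bar>)"
    using sum.reindex[OF inj, of "\<lambda>j. \<bar>u!j\<bar>"] img by simp
  also have "\<dots> = (\<Sum>i\<in>I. srt u ! i)" using p(2) unfolding I_def by simp
  also have "\<dots> \<le> (\<Sum>i<k. srt u ! i)"
    using sorted_top[OF srt_sorted, where J=I and k=k] cI unfolding I_def by auto
  finally show ?thesis unfolding topk_def .
qed

lemma topk_att:
  assumes "k \<le> length u"
  shows "\<exists>J. J \<subseteq> {..<length u} \<and> card J = k \<and> topk u k = (\<Sum>j\<in>J. \<bar>u!j\<bar>)"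
proof -
  obtain \<pi> where p: "\<pi> permutes {..<length u}" "\<And>i. i < length u \<Longrightarrow> srt u ! i = \<bar>u ! \<pi> i\<bar>"
    using srt_perm[of u] by blast
  have inj: "inj_on \<pi> {..<k}" using p(1) permutes_inj_on by blast
  have "topk u k = (\<Sum>i<k. \<bar>u ! \<pi> i\<bar>)" unfolding topk_def
    apply (rule sum.cong[OF refl])
    subgoal for i using p(2)[of i] assms by simp
    done
  also have "\<dots> = (\<Sum>j\<in>\<pi>`{..<k}. \<bar>u!j\<bar>)" using sum.reindex[OF inj, of "\<lambda>j. \<bar>u!j\<bar>"] by simp
  finally have 1: "topk u k = (\<Sum>j\<in>\<pi>`{..<k}. \<bar>u!j\<bar>)" .
  have 2: "\<pi>`{..<k} \<subseteq> {..<length u}"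
  proof
    fix x assume "x \<in> \<pi>`{..<k}"
    then obtain i where i: "i < k" "x = \<pi> i" by auto
    then have "i \<in> {..<length u}" using assms by simp
    then show "x \<in> {..<length u}" using permutes_in_image[OF p(1), of i] i by simp
  qed
  have 3: "card (\<pi>`{..<k}) = k" using card_image[OF inj] by simp
  show ?thesis using 1 2 3 by blast
qed

definition domi :: "int list \<Rightarrow> int list \<Rightarrow> bool" where
  "domi u' u \<longleftrightarrow> length u' = length u \<and> (\<forall>J \<subseteq> {..<length u}. \<exists>J' \<subseteq> {..<length u}.
      card J' = card J \<and> (\<Sum>j\<in>J. \<bar>u'!j\<bar>) \<le> (\<Sum>j\<in>J'. \<bar>u!j\<bar>))"

lemma dom_topk:
  assumes "domi u' u" "k \<le> length u"
  shows "topk u' k \<le> topk u k"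
proof -
  have l: "length u' = length u" using assms(1) domi_def by simp
  obtain J where J: "J \<subseteq> {..<length u}" "card J = k" "topk u' k = (\<Sum>j\<in>J. \<bar>u'!j\<bar>)"
    using topk_att[where k=k and u=u'] assms(2) l by force
  obtain J' where J': "J' \<subseteq> {..<length u}" "card J' = card J" "(\<Sum>j\<in>J. \<bar>u'!j\<bar>) \<le> (\<Sum>j\<in>J'. \<bar>u!j\<bar>)"
    using assms(1) J(1) unfolding domi_def by blast
  show ?thesis using J J' topk_ge[where J=J' and u=u and k=k] by simp
qed

lemma sum_weights:
  fixes w :: "nat \<Rightarrow> int"
  shows "(\<Sum>i<n. int (n - i) * w i) = (\<Sum>k<n. (\<Sum>i<Suc k. w i))"
proof (induction n)
  case (Suc n)
  have "(\<Sum>i<Suc n. int (Suc n - i) * w i) = (\<Sum>i<Suc n. int (n - i) * w i + w i)"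
    by (rule sum.cong) (auto simp: algebra_simps Suc_diff_le)
  also have "\<dots> = (\<Sum>i<n. int (n - i) * w i) + (\<Sum>i<Suc n. w i)"
    by (simp add: sum.distrib)
  finally show ?case using Suc by simp
qed simp

lemma sqs_srt: "(\<Sum>i<length u. (srt u ! i)^2) = sqs u"
proof -
  have "(\<Sum>i<length u. (srt u ! i)^2) = sum_list (map (\<lambda>x. x^2) (srt u))"
    by (simp add: sum_list_sum_nth atLeast0LessThan)
  also have "\<dots> = sum_mset (image_mset (\<lambda>x. x^2) (mset (srt u)))"
    by (metis mset_map sum_mset_sum_list)
  also have "\<dots> = sum_mset (image_mset (\<lambda>x. x^2) (mset (map abs u)))" by (simp add: srt_def)
  also have "\<dots> = sum_list (map (\<lambda>x. x^2) (map abs u))"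
    by (metis mset_map sum_mset_sum_list)
  also have "\<dots> = sqs u" unfolding sqs_def by (simp add: sum_list_sum_nth atLeast0LessThan)
  finally show ?thesis .
qed

lemma blk_eq: "blk u = sqs u + 2 * (\<Sum>k<length u. topk u (Suc k)) + (\<Sum>i<length u. (int (length u - i))^2)"
proof -
  let ?n = "length u"
  have "blk u = (\<Sum>i<?n. (srt u ! i)^2 + 2 * (int (?n - i) * srt u ! i) + (int (?n - i))^2)"
    unfolding blk_def by (rule sum.cong[OF refl]) (simp add: power2_sum)
  also have "\<dots> = (\<Sum>i<?n. (srt u ! i)^2) + 2 * (\<Sum>i<?n. int (?n - i) * srt u ! i) + (\<Sum>i<?n. (int (?n - i))^2)"
    by (simp add: sum.distrib sum_distrib_left)
  also have "\<dots> = sqs u + 2 * (\<Sum>k<length u. topk u (Suc k)) + (\<Sum>i<length u. (int (length u - i))^2)"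
    using sqs_srt sum_weights[of ?n "\<lambda>i. srt u ! i"] unfolding topk_def by simp
  finally show ?thesis .
qed

lemma blk_mono:
  assumes "domi u' u"
  shows "blk u' - sqs u' \<le> blk u - sqs u"
proof -
  have l: "length u' = length u" using assms domi_def by simp
  have "(\<Sum>k<length u. topk u' (Suc k)) \<le> (\<Sum>k<length u. topk u (Suc k))"
    by (rule sum_mono) (use dom_topk[OF assms] in auto)
  then show ?thesis using blk_eq[of u] blk_eq[of u'] l by simp
qed


lemma blk_le: "domi u' u \<Longrightarrow> blk u' + (sqs u - sqs u') \<le> blk u"
  using blk_mono by fastforce

lemma domi_pw:
  fixes u u' :: "int list"
  assumes "length u' = length u" "\<And>i. i < length u \<Longrightarrow> \<bar>u'!i\<bar> \<le> \<bar>u!i\<bar>"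
  shows "domi u' u"
  unfolding domi_def
proof (intro conjI allI impI)
  fix J assume J: "J \<subseteq> {..<length u}"
  have "(\<Sum>j\<in>J. \<bar>u'!j\<bar>) \<le> (\<Sum>j\<in>J. \<bar>u!j\<bar>)"
  proof (rule sum_mono)
    fix l assume "l \<in> J" then have "l < length u" using J by blast
    then show "\<bar>u'!l\<bar> \<le> \<bar>u!l\<bar>" by (rule assms(2))
  qed
  then show "\<exists>J'\<subseteq>{..<length u}. card J' = card J \<and> (\<Sum>j\<in>J. \<bar>u'!j\<bar>) \<le> (\<Sum>j\<in>J'. \<bar>u!j\<bar>)"
    using J by blast
qed (use assms in simp)

lemma comp_aux:
  fixes u u' :: "int list"
  assumes J: "J \<subseteq> {..<n}" and iJ: "i \<in> J" and jJ: "j \<notin> J" and jn: "j < n"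
    and eq: "\<And>l. l \<in> J \<Longrightarrow> l \<noteq> i \<Longrightarrow> \<bar>u'!l\<bar> = \<bar>u!l\<bar>"
    and mx: "\<bar>u'!i\<bar> \<le> max \<bar>u!i\<bar> \<bar>u!j\<bar>"
  shows "\<exists>J'\<subseteq>{..<n}. card J' = card J \<and> (\<Sum>l\<in>J. \<bar>u'!l\<bar>) \<le> (\<Sum>l\<in>J'. \<bar>u!l\<bar>)"
proof -
  have fin: "finite J" using J finite_subset by blast
  have r1: "(\<Sum>l\<in>J. \<bar>u'!l\<bar>) = \<bar>u'!i\<bar> + (\<Sum>l\<in>J-{i}. \<bar>u'!l\<bar>)"
    by (rule sum.remove[OF fin iJ])
  have r2: "(\<Sum>l\<in>J-{i}. \<bar>u'!l\<bar>) = (\<Sum>l\<in>J-{i}. \<bar>u!l\<bar>)"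
  proof (rule sum.cong[OF refl])
    fix l assume "l \<in> J - {i}" then show "\<bar>u'!l\<bar> = \<bar>u!l\<bar>" using eq by blast
  qed
  have r3: "(\<Sum>l\<in>J. \<bar>u!l\<bar>) = \<bar>u!i\<bar> + (\<Sum>l\<in>J-{i}. \<bar>u!l\<bar>)"
    by (rule sum.remove[OF fin iJ])
  show ?thesis
  proof (cases "\<bar>u'!i\<bar> \<le> \<bar>u!i\<bar>")
    case True
    have "(\<Sum>l\<in>J. \<bar>u'!l\<bar>) \<le> (\<Sum>l\<in>J. \<bar>u!l\<bar>)" using r1 r2 r3 True by linarith
    then show ?thesis using J by blast
  next
    case False
    then have le: "\<bar>u'!i\<bar> \<le> \<bar>u!j\<bar>" using mx by linarith
    define J' where "J' = insert j (J - {i})"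
    have nj: "j \<notin> J - {i}" using jJ by blast
    have finJ: "finite (J - {i})" using fin by blast
    have s4: "(\<Sum>l\<in>J'. \<bar>u!l\<bar>) = \<bar>u!j\<bar> + (\<Sum>l\<in>J-{i}. \<bar>u!l\<bar>)"
      unfolding J'_def by (rule sum.insert[OF finJ nj])
    have c1: "card J' = Suc (card (J - {i}))" unfolding J'_def using card_insert_disjoint[OF finJ nj] .
    have c2: "card J = Suc (card (J - {i}))" using card_Suc_Diff1[OF fin iJ] by simp
    have sub: "J' \<subseteq> {..<n}" unfolding J'_def using J jn by blast
    have "(\<Sum>l\<in>J. \<bar>u'!l\<bar>) \<le> (\<Sum>l\<in>J'. \<bar>u!l\<bar>)" using r1 r2 s4 le by linarith
    then show ?thesis using sub c1 c2 by (intro exI[of _ J']) simp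
  qed
qed

lemma domi_comp:
  fixes u u' :: "int list"
  assumes len: "length u' = length u" and i: "i < length u" and j: "j < length u" and ij: "i \<noteq> j"
    and eq: "\<And>l. l < length u \<Longrightarrow> l \<noteq> i \<Longrightarrow> l \<noteq> j \<Longrightarrow> \<bar>u'!l\<bar> = \<bar>u!l\<bar>"
    and sm: "\<bar>u'!i\<bar> + \<bar>u'!j\<bar> \<le> \<bar>u!i\<bar> + \<bar>u!j\<bar>"
    and mi: "\<bar>u'!i\<bar> \<le> max \<bar>u!i\<bar> \<bar>u!j\<bar>" and mj: "\<bar>u'!j\<bar> \<le> max \<bar>u!i\<bar> \<bar>u!j\<bar>"
  shows "domi u' u"
  unfolding domi_def
proof (intro conjI allI impI)
  show "length u' = length u" by (rule len)
  fix J assume J: "J \<subseteq> {..<length u}"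
  have fin: "finite J" using J finite_subset by blast
  show "\<exists>J'\<subseteq>{..<length u}. card J' = card J \<and> (\<Sum>l\<in>J. \<bar>u'!l\<bar>) \<le> (\<Sum>l\<in>J'. \<bar>u!l\<bar>)"
  proof (cases "i \<in> J")
    case iJ: True
    show ?thesis
    proof (cases "j \<in> J")
      case jJ: True
      have jJ': "j \<in> J - {i}" using jJ ij by blast
      have fin': "finite (J - {i})" using fin by blast
      have a1: "(\<Sum>l\<in>J. \<bar>u'!l\<bar>) = \<bar>u'!i\<bar> + (\<bar>u'!j\<bar> + (\<Sum>l\<in>J-{i}-{j}. \<bar>u'!l\<bar>))"
        using sum.remove[OF fin iJ, of "\<lambda>l. \<bar>u'!l\<bar>"] sum.remove[OF fin' jJ', of "\<lambda>l. \<bar>u'!l\<bar>"] by simp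
      have a2: "(\<Sum>l\<in>J. \<bar>u!l\<bar>) = \<bar>u!i\<bar> + (\<bar>u!j\<bar> + (\<Sum>l\<in>J-{i}-{j}. \<bar>u!l\<bar>))"
        using sum.remove[OF fin iJ, of "\<lambda>l. \<bar>u!l\<bar>"] sum.remove[OF fin' jJ', of "\<lambda>l. \<bar>u!l\<bar>"] by simp
      have a3: "(\<Sum>l\<in>J-{i}-{j}. \<bar>u'!l\<bar>) = (\<Sum>l\<in>J-{i}-{j}. \<bar>u!l\<bar>)"
      proof (rule sum.cong[OF refl])
        fix l assume l: "l \<in> J - {i} - {j}"
        then have "l < length u" using J by blast
        then show "\<bar>u'!l\<bar> = \<bar>u!l\<bar>" using eq l by blast
      qed
      have "(\<Sum>l\<in>J. \<bar>u'!l\<bar>) \<le> (\<Sum>l\<in>J. \<bar>u!l\<bar>)" using a1 a2 a3 sm by linarith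
      then show ?thesis using J by blast
    next
      case jJ: False
      show ?thesis
      proof (rule comp_aux[OF J iJ jJ j])
        fix l assume l: "l \<in> J" "l \<noteq> i"
        then have "l < length u" "l \<noteq> j" using J jJ by blast+
        then show "\<bar>u'!l\<bar> = \<bar>u!l\<bar>" using eq l by blast
      qed (rule mi)
    qed
  next
    case iJ: False
    show ?thesis
    proof (cases "j \<in> J")
      case jJ: True
      have mj': "\<bar>u'!j\<bar> \<le> max \<bar>u!j\<bar> \<bar>u!i\<bar>" using mj by linarith
      show ?thesis
      proof (rule comp_aux[OF J jJ iJ i])
        fix l assume l: "l \<in> J" "l \<noteq> j"
        then have "l < length u" "l \<noteq> i" using J iJ by blast+
        then show "\<bar>u'!l\<bar> = \<bar>u!l\<bar>" using eq l by blast
      qed (rule mj')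
    next
      case jJ: False
      have "(\<Sum>l\<in>J. \<bar>u'!l\<bar>) = (\<Sum>l\<in>J. \<bar>u!l\<bar>)"
      proof (rule sum.cong[OF refl])
        fix l assume l: "l \<in> J"
        then have "l < length u" "l \<noteq> i" "l \<noteq> j" using J iJ jJ by blast+
        then show "\<bar>u'!l\<bar> = \<bar>u!l\<bar>" using eq by blast
      qed
      then show ?thesis using J by auto
    qed
  qed
qed

lemma sqs_upd: "i < length u \<Longrightarrow> sqs (u[i := v]) = sqs u - (u!i)^2 + v^2"
proof -
  assume i: "i < length u"
  have "sqs (u[i := v]) = (\<Sum>l<length u. (u[i:=v]!l)^2)" by (simp add: sqs_def)
  also have "\<dots> = (\<Sum>l<length u. (u!l)^2 + (if l = i then v^2 - (u!i)^2 else 0))"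
    by (rule sum.cong) (auto simp: nth_list_update)
  also have "\<dots> = sqs u + (v^2 - (u!i)^2)" using i by (simp add: sum.distrib sqs_def)
  finally show ?thesis by simp
qed

lemma blk_one:
  assumes "i < length u" "\<bar>v\<bar> \<le> \<bar>u!i\<bar>"
  shows "blk (u[i := v]) + ((u!i)^2 - v^2) \<le> blk u"
proof -
  have "domi (u[i:=v]) u"
  proof (rule domi_pw)
    fix l assume "l < length u"
    then show "\<bar>u[i:=v]!l\<bar> \<le> \<bar>u!l\<bar>" using assms by (cases "l = i") simp_all
  qed simp
  then show ?thesis using blk_le[of "u[i:=v]" u] sqs_upd[OF assms(1), of v] by linarith
qed

lemma blk_two_pw:
  assumes "i < length u" "j < length u" "i \<noteq> j" "\<bar>v\<bar> \<le> \<bar>u!i\<bar>" "\<bar>w\<bar> \<le> \<bar>u!j\<bar>"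
  shows "blk (u[i := v, j := w]) + ((u!i)^2 - v^2) + ((u!j)^2 - w^2) \<le> blk u"
proof -
  have "domi (u[i:=v, j:=w]) u"
  proof (rule domi_pw)
    fix l assume "l < length u"
    then show "\<bar>u[i:=v, j:=w]!l\<bar> \<le> \<bar>u!l\<bar>" using assms
      by (cases "l = j"; cases "l = i") simp_all
  qed simp
  moreover have "sqs (u[i:=v, j:=w]) = sqs u - (u!i)^2 + v^2 - (u!j)^2 + w^2"
    using sqs_upd[of i u v] sqs_upd[of j "u[i:=v]" w] assms by simp
  ultimately show ?thesis using blk_le[of "u[i:=v, j:=w]" u] by linarith
qed

lemma blk_two_comp:
  assumes "i < length u" "j < length u" "i \<noteq> j"
    and "\<bar>v\<bar> + \<bar>w\<bar> \<le> \<bar>u!i\<bar> + \<bar>u!j\<bar>"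
    and "\<bar>v\<bar> \<le> max \<bar>u!i\<bar> \<bar>u!j\<bar>" "\<bar>w\<bar> \<le> max \<bar>u!i\<bar> \<bar>u!j\<bar>"
  shows "blk (u[i := v, j := w]) + ((u!i)^2 - v^2) + ((u!j)^2 - w^2) \<le> blk u"
proof -
  have ei: "u[i:=v, j:=w] ! i = v" using assms(1,3) by simp
  have ej: "u[i:=v, j:=w] ! j = w" using assms(2) by simp
  have "domi (u[i:=v, j:=w]) u"
  proof (rule domi_comp[of _ _ i j])
    fix l assume "l < length u" "l \<noteq> i" "l \<noteq> j"
    then show "\<bar>u[i:=v, j:=w]!l\<bar> = \<bar>u!l\<bar>" by simp
  qed (use assms ei ej in simp_all)
  moreover have "sqs (u[i:=v, j:=w]) = sqs u - (u!i)^2 + v^2 - (u!j)^2 + w^2"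
    using sqs_upd[of i u v] sqs_upd[of j "u[i:=v]" w] assms by simp
  ultimately show ?thesis using blk_le[of "u[i:=v, j:=w]" u] by linarith
qed

lemma knorm_blk:
  assumes "length (fst \<nu>) = p" "length (snd \<nu>) = q"
  shows "knorm p q \<nu> = sqrt (real_of_int (blk (fst \<nu>) + blk (snd \<nu>)))"
proof -
  have key: "sum_list (map (\<lambda>v. v^2) (map2 (+) (rev (sort (map abs u))) (map int (rev [1..<n+1])))) = blk u"
    if "length u = n" for u :: "int list" and n
  proof -
    let ?L = "map2 (+) (rev (sort (map abs u))) (map int (rev [1..<n+1]))"
    have len: "length ?L = n" using that by simp
    have h: "map int (rev [1..<n+1]) ! i = int n - int i" if "i < n" for i
      using that by (simp add: rev_nth del: upt_Suc)
    have e: "?L ! i = srt u ! i + int (n - i)" if "i < n" for i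
      using that h[OF that] \<open>length u = n\<close> by (simp add: srt_def of_nat_diff del: upt_Suc)
    have "sum_list (map (\<lambda>v. v^2) ?L) = (\<Sum>i<n. (?L ! i)^2)"
      using len by (simp add: sum_list_sum_nth atLeast0LessThan)
    also have "\<dots> = blk u" unfolding blk_def
    proof (rule sum.cong)
      show "{..<n} = {..<length u}" using that by simp
      fix i assume "i \<in> {..<length u}"
      then have i: "i < n" using that by simp
      show "(?L ! i)^2 = (srt u ! i + int (length u - i))^2" using e[OF i] that by (simp only:)
    qed
    finally show ?thesis .
  qed
  show ?thesis unfolding knorm_def wnorm_def wplus_def brace_def rho_c_def
    using key[OF assms(1)] key[OF assms(2)] by simp
qed


lemma sum_split_bound:
  fixes B :: "nat \<Rightarrow> int"
  assumes "m \<le> g" "\<And>j. j < m \<Longrightarrow> B j \<le> K1" "\<And>j. m \<le> j \<Longrightarrow> j < g \<Longrightarrow> B j \<le> K2"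
  shows "(\<Sum>j<g. B j) \<le> int m * K1 + int (g - m) * K2"
proof -
  have e: "{..<g} = {..<m} \<union> {m..<g}" using assms(1) by auto
  have "(\<Sum>j<g. B j) = (\<Sum>j<m. B j) + (\<Sum>j\<in>{m..<g}. B j)"
    unfolding e by (rule sum.union_disjoint) auto
  moreover have "(\<Sum>j<m. B j) \<le> int m * K1"
    using sum_bounded_above[of "{..<m}" B K1] assms(2) by simp
  moreover have "(\<Sum>j\<in>{m..<g}. B j) \<le> int (g - m) * K2"
    using sum_bounded_above[of "{m..<g}" B K2] assms(3) by simp
  ultimately show ?thesis by linarith
qed

lemma FU:
  fixes A B :: "nat \<Rightarrow> int"
  assumes "f \<le> p" "g \<le> q" "\<And>i. i < p \<Longrightarrow> A i \<le> int q" "\<And>j. j < q \<Longrightarrow> B j \<le> int p"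
  shows "(\<Sum>i<f. A i) + (\<Sum>j<g. B j) \<le> 2*int p*int q - 2*(int p - int f)*(int q - int g)"
proof -
  have 1: "(\<Sum>i<f. A i) \<le> int f * int q" using sum_bounded_above[of "{..<f}" A "int q"] assms(1,3) by simp
  have 2: "(\<Sum>j<g. B j) \<le> int g * int p" using sum_bounded_above[of "{..<g}" B "int p"] assms(2,4) by simp
  have 3: "0 \<le> int g * (int p - int f)" using assms(1) by simp
  have 4: "0 \<le> int f * (int q - int g)" using assms(2) by simp
  have "2*int p*int q - 2*(int p - int f)*(int q - int g) = int f * int q + int g * int p + int g * (int p - int f) + int f * (int q - int g)"
    by (simp add: algebra_simps)
  then show ?thesis using 1 2 3 4 by linarith
qed

lemma F2:
  fixes A B :: "nat \<Rightarrow> int"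
  assumes "f \<le> p" "g \<le> q" "1 \<le> k" "k \<le> q"
    "\<And>i. i < p \<Longrightarrow> A i \<le> int q - int k" "\<And>j. j < q \<Longrightarrow> B j \<le> 2 * int p"
    "\<And>j. k \<le> j \<Longrightarrow> j < q \<Longrightarrow> B j \<le> int p - 1"
  shows "(\<Sum>i<f. A i) + (\<Sum>j<g. B j) \<le> 2*int p*int q - 2*(int p - int f)*(int q - int g)"
proof -
  have 1: "(\<Sum>i<f. A i) \<le> int f * (int q - int k)" using sum_bounded_above[of "{..<f}" A "int q - int k"] assms(1,5) by simp
  show ?thesis
  proof (cases "g \<le> k")
    case True
    have 2: "(\<Sum>j<g. B j) \<le> int g * (2 * int p)" using sum_bounded_above[of "{..<g}" B "2 * int p"] assms(2,6) by simp
    have 3: "int f * (int q - int k) \<le> int f * (2 * (int q - int g))"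
      by (rule mult_left_mono) (use True assms in auto)
    have "2*int p*int q - 2*(int p - int f)*(int q - int g) = int g * (2 * int p) + int f * (2 * (int q - int g))"
      by (simp add: algebra_simps)
    then show ?thesis using 1 2 3 by linarith
  next
    case False
    have 2: "(\<Sum>j<g. B j) \<le> int k * (2 * int p) + int (g - k) * (int p - 1)"
      by (rule sum_split_bound) (use False assms in auto)
    define d where "d = int g - int k"
    have d: "int (g - k) = d" "0 \<le> d" "d \<le> int q - int k" using False assms d_def by auto
    have 3: "int f * d \<le> int f * (int q - int k)" by (rule mult_left_mono) (use d in auto)
    have 4: "int f * d \<le> (int p + 1) * d" by (rule mult_right_mono) (use d assms in auto)
    have "2*int p*int q - 2*(int p - int f)*(int q - int g) - (int f * (int q - int k) + (int k * (2 * int p) + d * (int p - 1)))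
        = (int p + 1) * d + int f * (int q - int k) - 2 * (int f * d)"
      unfolding d_def by (simp add: algebra_simps)
    then show ?thesis using 1 2 3 4 d(1) by simp
  qed
qed

lemma F3:
  fixes A B :: "nat \<Rightarrow> int"
  assumes "f \<le> p" "g \<le> q" "i0 \<le> p" "0 \<le> e" "e \<le> int q - 1"
    "\<And>i. i < p \<Longrightarrow> A i \<le> 2 * int q" "\<And>i. i0 \<le> i \<Longrightarrow> i < p \<Longrightarrow> A i \<le> e"
    "\<And>j. j < q \<Longrightarrow> B j \<le> int p - int i0"
  shows "(\<Sum>i<f. A i) + (\<Sum>j<g. B j) \<le> 2*int p*int q - 2*(int p - int f)*(int q - int g)"
proof -
  define d where "d = int p - int i0"
  have 2: "(\<Sum>j<g. B j) \<le> int g * d" using sum_bounded_above[of "{..<g}" B d] assms(2,8) d_def by simp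
  show ?thesis
  proof (cases "f \<le> i0")
    case True
    have 1: "(\<Sum>i<f. A i) \<le> int f * (2 * int q)" using sum_bounded_above[of "{..<f}" A "2 * int q"] assms(1,6) by simp
    have 3: "int g * d \<le> int g * (2 * (int p - int f))" by (rule mult_left_mono) (use True assms d_def in auto)
    have "2*int p*int q - 2*(int p - int f)*(int q - int g) = int f * (2 * int q) + int g * (2 * (int p - int f))"
      by (simp add: algebra_simps)
    then show ?thesis using 1 2 3 by linarith
  next
    case False
    have 1: "(\<Sum>i<f. A i) \<le> int i0 * (2 * int q) + int (f - i0) * e"
      by (rule sum_split_bound) (use False assms in auto)
    define m where "m = int f - int i0"
    have m: "int (f - i0) = m" "0 \<le> m" "m \<le> d" using False assms m_def d_def by auto
    have 3: "m * int g \<le> d * int g" by (rule mult_right_mono) (use m in auto)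
    have 4: "m * e \<le> m * (int q - 1)" by (rule mult_left_mono) (use m assms in auto)
    have h4b: "m * (int q - 1) = m * int q - m" by (simp add: algebra_simps)
    have 5: "m * int g \<le> m * int q" by (rule mult_left_mono) (use m assms in auto)
    have eq: "2*int p*int q - 2*(int p - int f)*(int q - int g) = int i0 * (2 * int q) + 2 * (d * int g) + 2 * (m * int q) - 2 * (m * int g)"
      unfolding m_def d_def by (simp add: algebra_simps)
    have h2b: "(\<Sum>j<g. B j) \<le> d * int g" using 2 by (simp add: mult.commute)
    have h1b: "(\<Sum>i<f. A i) \<le> int i0 * (2 * int q) + m * e" using 1 m(1) by simp
    show ?thesis unfolding eq using h1b h2b 3 4 h4b 5 m(2) by linarith
  qed
qed


definition Yf :: "nat \<Rightarrow> nat \<Rightarrow> int list \<Rightarrow> int list" where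
  "Yf p q x = map (\<lambda>j. int (card {i. i < p \<and> int q - x ! i \<ge> int j})) [1..<q+1]"

lemma Yf_len[simp]: "length (Yf p q x) = q"
  by (simp add: Yf_def)

lemma Yf_nth: "j < q \<Longrightarrow> Yf p q x ! j = int (card {i. i < p \<and> x ! i \<le> int q - int j - 1})"
proof -
  assume j: "j < q"
  have "Yf p q x ! j = int (card {i. i < p \<and> int q - x ! i \<ge> int (Suc j)})"
    unfolding Yf_def using j by (simp add: nth_append del: upt_Suc)
  also have "{i. i < p \<and> int q - x ! i \<ge> int (Suc j)} = {i. i < p \<and> x ! i \<le> int q - int j - 1}"
    by auto
  finally show ?thesis .
qed

lemma card_rm: "finite S \<Longrightarrow> int (card S) = int (card (S - {r})) + (if r \<in> S then 1 else 0)"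
proof (cases "r \<in> S")
  case True
  assume "finite S"
  then show ?thesis using card.remove[OF \<open>finite S\<close> True] True by simp
qed simp

lemma Yf_upd:
  assumes "r < p" "j < q" "length x = p"
  shows "Yf p q (x[r := w]) ! j = Yf p q x ! j
     + (if w \<le> int q - int j - 1 then 1 else 0) - (if x!r \<le> int q - int j - 1 then 1 else 0)"
proof -
  let ?t = "int q - int j - 1"
  let ?S' = "{i. i < p \<and> x[r:=w] ! i \<le> ?t}" and ?S = "{i. i < p \<and> x ! i \<le> ?t}"
  have f1: "finite ?S'" and f2: "finite ?S" by auto
  have eq: "?S' - {r} = ?S - {r}"
  proof (rule set_eqI)
    fix i show "i \<in> ?S' - {r} \<longleftrightarrow> i \<in> ?S - {r}" by (cases "i = r") simp_all
  qed
  have c1: "int (card ?S') = int (card (?S' - {r})) + (if r \<in> ?S' then 1 else 0)" by (rule card_rm[OF f1])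
  have c2: "int (card ?S) = int (card (?S - {r})) + (if r \<in> ?S then 1 else 0)" by (rule card_rm[OF f2])
  have m1: "(r \<in> ?S') = (w \<le> ?t)" using assms by simp
  have m2: "(r \<in> ?S) = (x!r \<le> ?t)" using assms by simp
  show ?thesis
    unfolding Yf_nth[OF assms(2), of p x] Yf_nth[OF assms(2), of p "x[r:=w]"]
    using c1 c2 eq m1 m2 by simp
qed

lemma Yf_le_p: "j < q \<Longrightarrow> Yf p q x ! j \<le> int p"
proof -
  assume j: "j < q"
  have "card {i. i < p \<and> x ! i \<le> int q - int j - 1} \<le> card {..<p}" by (rule card_mono) auto
  then show ?thesis using Yf_nth[OF j] by simp
qed

lemma Yf_le_p1:
  assumes "j < q" "0 < p" "\<not> x!0 \<le> int q - int j - 1"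
  shows "Yf p q x ! j \<le> int p - 1"
proof -
  have "{i. i < p \<and> x ! i \<le> int q - int j - 1} \<subseteq> {1..<p}" using assms(3)
    by auto (metis One_nat_def less_one not_less)
  then have "card {i. i < p \<and> x ! i \<le> int q - int j - 1} \<le> card {1..<p}" by (rule card_mono[rotated]) auto
  then show ?thesis using Yf_nth[OF assms(1)] assms(2) by simp
qed

lemma Yf_mono:
  assumes "j \<le> j'" "j' < q"
  shows "Yf p q x ! j' \<le> Yf p q x ! j"
proof -
  have "{i. i < p \<and> x ! i \<le> int q - int j' - 1} \<subseteq> {i. i < p \<and> x ! i \<le> int q - int j - 1}"
    using assms by auto
  then have "card {i. i < p \<and> x ! i \<le> int q - int j' - 1} \<le> card {i. i < p \<and> x ! i \<le> int q - int j - 1}"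
    by (rule card_mono[rotated]) auto
  then show ?thesis using Yf_nth[OF assms(2)] Yf_nth[of j q p x] assms by simp
qed

lemma map2_upd_left:
  assumes "length a = length x" "i < length a"
  shows "map2 (-) (a[i := c]) x = (map2 (-) a x)[i := c - x!i]"
proof (rule nth_equalityI)
  show "length (map2 (-) (a[i := c]) x) = length ((map2 (-) a x)[i := c - x!i])" by simp
  fix k assume "k < length (map2 (-) (a[i := c]) x)"
  then have k: "k < length a" using assms by simp
  show "map2 (-) (a[i := c]) x ! k = (map2 (-) a x)[i := c - x!i] ! k"
    using k assms by (cases "k = i") simp_all
qed

lemma map2_upd_right:
  assumes "length a = length x" "i < length a"
  shows "map2 (-) a (x[i := c]) = (map2 (-) a x)[i := a!i - c]"
proof (rule nth_equalityI)
  show "length (map2 (-) a (x[i := c])) = length ((map2 (-) a x)[i := a!i - c])" by simp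
  fix k assume "k < length (map2 (-) a (x[i := c]))"
  then have k: "k < length a" using assms by simp
  show "map2 (-) a (x[i := c]) ! k = (map2 (-) a x)[i := a!i - c] ! k"
    using k assms by (cases "k = i") simp_all
qed

lemma blk_dec1:
  assumes "i < length u" "1 \<le> u!i"
  shows "blk (u[i := u!i - 1]) < blk u"
proof -
  have ab: "\<bar>u!i - 1\<bar> \<le> \<bar>u!i\<bar>" using assms(2) by simp
  have "blk (u[i := u!i - 1]) + ((u!i)^2 - (u!i - 1)^2) \<le> blk u"
    by (rule blk_one[OF assms(1) ab])
  moreover have "(u!i)^2 - (u!i - 1)^2 = 2 * u!i - 1" by (simp add: power2_eq_square algebra_simps)
  ultimately show ?thesis using assms(2) by linarith
qed

lemma blk_dec2:
  assumes "i < length u" "2 \<le> u!i"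
  shows "blk (u[i := u!i - 2]) < blk u"
proof -
  have ab: "\<bar>u!i - 2\<bar> \<le> \<bar>u!i\<bar>" using assms(2) by simp
  have "blk (u[i := u!i - 2]) + ((u!i)^2 - (u!i - 2)^2) \<le> blk u"
    by (rule blk_one[OF assms(1) ab])
  moreover have "(u!i)^2 - (u!i - 2)^2 = 4 * u!i - 4" by (simp add: power2_eq_square algebra_simps)
  ultimately show ?thesis using assms(2) by linarith
qed

lemma blk_comp_weak:
  assumes "i < length u" "j < length u" "i \<noteq> j" "u!i \<le> 0" "u!j \<le> u!i - 1"
  shows "blk (u[i := u!i - 1, j := u!j + 1]) \<le> blk u"
proof -
  have a1: "\<bar>u!i - 1\<bar> = 1 - u!i" "\<bar>u!j + 1\<bar> = - u!j - 1" "\<bar>u!i\<bar> = - u!i" "\<bar>u!j\<bar> = - u!j"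
    using assms(4,5) by simp_all
  have mx: "max \<bar>u!i\<bar> \<bar>u!j\<bar> = - u!j" unfolding a1 using assms(5) by simp
  have c1: "\<bar>u!i - 1\<bar> + \<bar>u!j + 1\<bar> \<le> \<bar>u!i\<bar> + \<bar>u!j\<bar>" unfolding a1 by simp
  have c2: "\<bar>u!i - 1\<bar> \<le> max \<bar>u!i\<bar> \<bar>u!j\<bar>" unfolding mx unfolding a1 using assms(5) by simp
  have c3: "\<bar>u!j + 1\<bar> \<le> max \<bar>u!i\<bar> \<bar>u!j\<bar>" unfolding mx unfolding a1 by simp
  have "blk (u[i := u!i - 1, j := u!j + 1]) + ((u!i)^2 - (u!i - 1)^2) + ((u!j)^2 - (u!j + 1)^2) \<le> blk u"
    by (rule blk_two_comp[OF assms(1,2,3) c1 c2 c3])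
  moreover have "(u!i)^2 - (u!i - 1)^2 = 2 * u!i - 1" by (simp add: power2_eq_square algebra_simps)
  moreover have "(u!j)^2 - (u!j + 1)^2 = - 2 * u!j - 1" by (simp add: power2_eq_square algebra_simps)
  ultimately show ?thesis using assms(4,5) by linarith
qed

lemma blk_dec_two:
  assumes "i < length u" "j < length u" "i \<noteq> j" "1 \<le> u!i" "1 \<le> u!j \<or> 2 \<le> u!i + u!j"
  shows "blk (u[i := u!i - 1, j := u!j - 1]) < blk u"
proof -
  have s1: "(u!i)^2 - (u!i - 1)^2 = 2 * u!i - 1" by (simp add: power2_eq_square algebra_simps)
  have s2: "(u!j)^2 - (u!j - 1)^2 = 2 * u!j - 1" by (simp add: power2_eq_square algebra_simps)
  show ?thesis
  proof (cases "1 \<le> u!j")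
    case True
    have b1: "\<bar>u!i - 1\<bar> \<le> \<bar>u!i\<bar>" using assms(4) by simp
    have b2: "\<bar>u!j - 1\<bar> \<le> \<bar>u!j\<bar>" using True by simp
    have "blk (u[i := u!i - 1, j := u!j - 1]) + ((u!i)^2 - (u!i - 1)^2) + ((u!j)^2 - (u!j - 1)^2) \<le> blk u"
      by (rule blk_two_pw[OF assms(1,2,3) b1 b2])
    then show ?thesis using s1 s2 assms(4) True by linarith
  next
    case False
    then have c: "2 \<le> u!i + u!j" "u!j \<le> 0" using assms(5) by auto
    have a1: "\<bar>u!i - 1\<bar> = u!i - 1" "\<bar>u!j - 1\<bar> = 1 - u!j" "\<bar>u!i\<bar> = u!i" "\<bar>u!j\<bar> = - u!j"
      using assms(4) c by simp_all
    have mx: "max \<bar>u!i\<bar> \<bar>u!j\<bar> = u!i" unfolding a1 using c by simp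
    have c1: "\<bar>u!i - 1\<bar> + \<bar>u!j - 1\<bar> \<le> \<bar>u!i\<bar> + \<bar>u!j\<bar>" unfolding a1 by simp
    have c2: "\<bar>u!i - 1\<bar> \<le> max \<bar>u!i\<bar> \<bar>u!j\<bar>" unfolding mx unfolding a1 by simp
    have c3: "\<bar>u!j - 1\<bar> \<le> max \<bar>u!i\<bar> \<bar>u!j\<bar>" unfolding mx unfolding a1 using c by simp
    have "blk (u[i := u!i - 1, j := u!j - 1]) + ((u!i)^2 - (u!i - 1)^2) + ((u!j)^2 - (u!j - 1)^2) \<le> blk u"
      by (rule blk_two_comp[OF assms(1,2,3) c1 c2 c3])
    then show ?thesis using s1 s2 assms c by linarith
  qed
qed


lemma main_step:
  fixes a b x :: "int list" and p q :: nat
  assumes p1: "1 \<le> p" and pq: "p \<le> q" and la: "length a = p" and lb: "length b = q"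
    and ad: "\<And>i j. i \<le> j \<Longrightarrow> j < p \<Longrightarrow> a!j \<le> a!i"
    and bd: "\<And>i j. i \<le> j \<Longrightarrow> j < q \<Longrightarrow> b!j \<le> b!i"
    and bnn: "\<And>j. j < q \<Longrightarrow> 0 \<le> b!j" and ann: "\<And>i. i < p \<Longrightarrow> 0 \<le> a!i"
    and a0: "1 \<le> a!0" and b0: "1 \<le> b!0"
    and a1: "\<And>i. 1 \<le> i \<Longrightarrow> i < p \<Longrightarrow> a!i \<le> a!0 - 1"
    and b1: "\<And>j. 1 \<le> j \<Longrightarrow> j < q \<Longrightarrow> b!j \<le> b!0 - 1"
    and UL: "\<exists>f\<le>p. \<exists>g\<le>q. (\<Sum>i<f. a!i) + (\<Sum>j<g. b!j) > 2*int p*int q - 2*(int p - int f)*(int q - int g)"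
    and lx: "length x = p" and xs: "\<And>i j. i \<le> j \<Longrightarrow> j < p \<Longrightarrow> x!j \<le> x!i"
    and xb: "\<And>i. i < p \<Longrightarrow> 0 \<le> x!i \<and> x!i \<le> int q"
  shows "\<exists>x'. length x' = p \<and> (\<forall>i j. i \<le> j \<longrightarrow> j < p \<longrightarrow> x'!j \<le> x'!i) \<and> (\<forall>i<p. 0 \<le> x'!i \<and> x'!i \<le> int q) \<and>
     blk (map2 (-) (a[0 := a!0 - 1]) x') + blk (map2 (-) (b[0 := b!0 - 1]) (Yf p q x'))
     < blk (map2 (-) a x) + blk (map2 (-) b (Yf p q x))"
proof -
  obtain f g where fg: "f \<le> p" "g \<le> q"
    and H: "(\<Sum>i<f. a!i) + (\<Sum>j<g. b!j) > 2*int p*int q - 2*(int p - int f)*(int q - int g)"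
    using UL by blast
  have q1: "1 \<le> q" using p1 pq by simp
  define y where "y = Yf p q x"
  define u where "u = map2 (-) a x"
  define v where "v = map2 (-) b y"
  have ly: "length y = q" unfolding y_def by simp
  have lu: "length u = p" unfolding u_def using la lx by simp
  have lv: "length v = q" unfolding v_def using lb ly by simp
  have un: "\<And>i. i < p \<Longrightarrow> u!i = a!i - x!i" unfolding u_def using la lx by simp
  have vn: "\<And>j. j < q \<Longrightarrow> v!j = b!j - y!j" unfolding v_def using lb ly by simp
  have p0: "0 < p" and q0: "0 < q" using p1 q1 by auto
  have ua: "map2 (-) (a[0 := a!0 - 1]) x = u[0 := u!0 - 1]"
  proof -
    have "map2 (-) (a[0 := a!0 - 1]) x = u[0 := a!0 - 1 - x!0]"
      unfolding u_def by (rule map2_upd_left) (use la lx p0 in auto)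
    moreover have "a!0 - 1 - x!0 = u!0 - 1" using un[OF p0] by simp
    ultimately show ?thesis by simp
  qed
  have vb: "map2 (-) (b[0 := b!0 - 1]) y = v[0 := v!0 - 1]"
  proof -
    have "map2 (-) (b[0 := b!0 - 1]) y = v[0 := b!0 - 1 - y!0]"
      unfolding v_def by (rule map2_upd_left) (use lb ly q0 in auto)
    moreover have "b!0 - 1 - y!0 = v!0 - 1" using vn[OF q0] by simp
    ultimately show ?thesis by simp
  qed
  have y0p: "y!0 \<le> int p" unfolding y_def by (rule Yf_le_p[OF q0])
  consider (I) "1 \<le> u!0" "1 \<le> v!0" | (II) "u!0 \<le> 0" | (III) "1 \<le> u!0" "v!0 \<le> 0" by linarith
  then show ?thesis
  proof cases
    case I
    have "blk (u[0 := u!0 - 1]) < blk u" by (rule blk_dec1) (use lu p0 I in auto)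
    moreover have "blk (v[0 := v!0 - 1]) < blk v" by (rule blk_dec1) (use lv q0 I in auto)
    ultimately have "blk (map2 (-) (a[0 := a!0 - 1]) x) + blk (map2 (-) (b[0 := b!0 - 1]) (Yf p q x))
        < blk (map2 (-) a x) + blk (map2 (-) b (Yf p q x))"
      using ua vb unfolding u_def v_def y_def by simp
    then show ?thesis using lx xs xb by blast
  next
    case II
    define c where "c = x!0"
    have ca: "a!0 \<le> c" using II un[OF p0] unfolding c_def by simp
    have c1: "1 \<le> c" using ca a0 by simp
    have cq: "c \<le> int q" using xb[OF p0] unfolding c_def by simp
    have xc: "\<And>i. i < p \<Longrightarrow> x!i \<le> c" unfolding c_def using xs by simp
    have aq: "\<And>i. i < p \<Longrightarrow> a!i \<le> c" using ad[of 0] ca by fastforce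
    have b0p: "int p < b!0"
    proof (rule ccontr)
      assume "\<not> int p < b!0"
      then have "\<And>j. j < q \<Longrightarrow> b!j \<le> int p" using bd[of 0] by fastforce
      moreover have "\<And>i. i < p \<Longrightarrow> a!i \<le> int q" using aq cq by fastforce
      ultimately have "(\<Sum>i<f. a!i) + (\<Sum>j<g. b!j) \<le> 2*int p*int q - 2*(int p - int f)*(int q - int g)"
        by (intro FU fg) auto
      then show False using H by linarith
    qed
    define R where "R = {i. i < p \<and> x!i = c}"
    have finR: "finite R" unfolding R_def by simp
    have R0: "0 \<in> R" unfolding R_def c_def using p0 by simp
    define r where "r = Max R"
    have rR: "r \<in> R" unfolding r_def using Max_in[OF finR] R0 by blast
    have rp: "r < p" and xr: "x!r = c" using rR unfolding R_def by auto
    have xafter: "\<And>i. r < i \<Longrightarrow> i < p \<Longrightarrow> x!i \<le> c - 1"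
    proof -
      fix i assume "r < i" "i < p"
      have "x!i \<noteq> c"
      proof
        assume "x!i = c" then have "i \<in> R" unfolding R_def using \<open>i < p\<close> by simp
        then have "i \<le> r" unfolding r_def using Max_ge[OF finR] by simp
        then show False using \<open>r < i\<close> by simp
      qed
      then show "x!i \<le> c - 1" using xc[OF \<open>i < p\<close>] by simp
    qed
    have xbefore: "\<And>i. i \<le> r \<Longrightarrow> x!i = c"
    proof -
      fix i assume "i \<le> r"
      then have "c \<le> x!i" using xs[of i r] rp xr by simp
      moreover have "x!i \<le> c" using xc \<open>i \<le> r\<close> rp by simp
      ultimately show "x!i = c" by simp
    qed
    define x' where "x' = x[r := c - 1]"
    have lx': "length x' = p" unfolding x'_def using lx by simp
    have x'n: "\<And>i. x'!i = (if i = r then c - 1 else x!i)" unfolding x'_def using lx rp by simp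
    have x's: "\<forall>i j. i \<le> j \<longrightarrow> j < p \<longrightarrow> x'!j \<le> x'!i"
    proof (intro allI impI)
      fix i j assume ij: "i \<le> j" "j < p"
      show "x'!j \<le> x'!i"
      proof (cases "j = r")
        case True
        then show ?thesis using x'n xbefore[of i] ij by simp
      next
        case False
        show ?thesis
        proof (cases "i = r")
          case True
          then have "r < j" using ij \<open>j \<noteq> r\<close> by simp
          then show ?thesis using x'n xafter[of j] ij True False by simp
        next
          case False
          then show ?thesis using x'n xs[OF ij] \<open>j \<noteq> r\<close> by simp
        qed
      qed
    qed
    have x'b: "\<forall>i<p. 0 \<le> x'!i \<and> x'!i \<le> int q"
      using x'n xb c1 cq by simp
    define kk where "kk = nat (int q - c)"
    have kk: "int kk = int q - c" unfolding kk_def using cq by simp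
    have kkq: "kk < q" using kk c1 by simp
    have Y': "Yf p q x' = y[kk := y!kk + 1]"
    proof (rule nth_equalityI)
      show "length (Yf p q x') = length (y[kk := y!kk + 1])" using ly by simp
      fix j assume "j < length (Yf p q x')"
      then have j: "j < q" by simp
      have "Yf p q x' ! j = y!j + (if c - 1 \<le> int q - int j - 1 then 1 else 0) - (if c \<le> int q - int j - 1 then 1 else 0)"
        unfolding x'_def y_def using Yf_upd[OF rp j lx] xr by simp
      also have "\<dots> = y!j + (if j = kk then 1 else 0)" using kk by auto
      finally show "Yf p q x' ! j = y[kk := y!kk + 1] ! j" using ly j by (cases "j = kk") simp_all
    qed
    have ublk: "blk (map2 (-) (a[0 := a!0 - 1]) x') \<le> blk u"
    proof (cases "r = 0")
      case True
      have "map2 (-) (a[0 := a!0 - 1]) x' = (map2 (-) (a[0 := a!0 - 1]) x)[0 := (a[0 := a!0 - 1])!0 - (c - 1)]"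
        unfolding x'_def True by (rule map2_upd_right) (use la lx p0 in auto)
      also have "\<dots> = u[0 := u!0]"
      proof -
        have h: "(a[0 := a!0 - 1])!0 - (c - 1) = u!0" using un[OF p0] c_def la p0 by simp
        show ?thesis unfolding ua by (simp only: h list_update_overwrite)
      qed
      also have "\<dots> = u" by simp
      finally show ?thesis by simp
    next
      case False
      have "map2 (-) (a[0 := a!0 - 1]) x' = (map2 (-) (a[0 := a!0 - 1]) x)[r := (a[0 := a!0 - 1])!r - (c - 1)]"
        unfolding x'_def by (rule map2_upd_right) (use la lx rp in auto)
      also have "\<dots> = u[0 := u!0 - 1, r := u!r + 1]"
      proof -
        have h: "(a[0 := a!0 - 1])!r - (c - 1) = u!r + 1" using False un[OF rp] xr by simp
        show ?thesis unfolding ua by (simp only: h)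
      qed
      finally have e: "map2 (-) (a[0 := a!0 - 1]) x' = u[0 := u!0 - 1, r := u!r + 1]" .
      have "u!r \<le> u!0 - 1" using un[OF rp] un[OF p0] xr c_def a1[of r] False rp by simp
      then show ?thesis unfolding e by (intro blk_comp_weak) (use lu rp p0 False II in auto)
    qed
    have vblk: "blk (map2 (-) (b[0 := b!0 - 1]) (Yf p q x')) < blk v"
    proof -
      have e1: "map2 (-) (b[0 := b!0 - 1]) (Yf p q x') = (v[0 := v!0 - 1])[kk := (b[0 := b!0 - 1])!kk - (y!kk + 1)]"
        unfolding Y' vb[symmetric] by (rule map2_upd_right) (use lb ly kkq in auto)
      show ?thesis
      proof (cases "kk = 0")
        case True
        have "y!0 \<le> int p - 1" unfolding y_def by (rule Yf_le_p1) (use q0 p0 kk True c_def in auto)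
        then have v2: "2 \<le> v!0" using vn[OF q0] b0p by simp
        have "map2 (-) (b[0 := b!0 - 1]) (Yf p q x') = v[0 := v!0 - 2]"
          unfolding e1 True using vn[OF q0] lb q0 by simp
        then show ?thesis using blk_dec2[of 0 v] lv q0 v2 by simp
      next
        case False
        have e2: "map2 (-) (b[0 := b!0 - 1]) (Yf p q x') = v[0 := v!0 - 1, kk := v!kk - 1]"
        proof -
          have h: "(b[0 := b!0 - 1])!kk - (y!kk + 1) = v!kk - 1" using False vn[OF kkq] by simp
          show ?thesis unfolding e1 by (simp only: h)
        qed
        have ykk: "y!kk \<le> int p - 1" unfolding y_def by (rule Yf_le_p1) (use kkq p0 kk c_def in auto)
        have v1: "1 \<le> v!0" using vn[OF q0] b0p y0p by simp
        have "1 \<le> v!kk \<or> 2 \<le> v!0 + v!kk"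
        proof (cases "1 \<le> v!kk")
          case False
          then have bkk: "b!kk \<le> int p - 1" using vn[OF kkq] ykk by simp
          have b2p: "2 * int p + 1 \<le> b!0"
          proof (rule ccontr)
            assume "\<not> 2 * int p + 1 \<le> b!0"
            then have "\<And>j. j < q \<Longrightarrow> b!j \<le> 2 * int p" using bd[of 0] by fastforce
            moreover have "\<And>j. kk \<le> j \<Longrightarrow> j < q \<Longrightarrow> b!j \<le> int p - 1" using bd[of kk] bkk by fastforce
            moreover have "\<And>i. i < p \<Longrightarrow> a!i \<le> int q - int kk" using aq kk by simp
            ultimately have "(\<Sum>i<f. a!i) + (\<Sum>j<g. b!j) \<le> 2*int p*int q - 2*(int p - int f)*(int q - int g)"
              by (intro F2[where k=kk] fg) (use \<open>kk \<noteq> 0\<close> kkq in auto)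
            then show False using H by linarith
          qed
          have "0 \<le> b!kk" using bnn[OF kkq] .
          then show ?thesis using vn[OF kkq] vn[OF q0] ykk y0p b2p by simp
        qed simp
        then show ?thesis unfolding e2 using blk_dec_two[of 0 v kk] lv q0 kkq False v1 by simp
      qed
    qed
    have "blk (map2 (-) (a[0 := a!0 - 1]) x') + blk (map2 (-) (b[0 := b!0 - 1]) (Yf p q x'))
        < blk (map2 (-) a x) + blk (map2 (-) b (Yf p q x))"
      using ublk vblk unfolding u_def v_def y_def by simp
    then show ?thesis using lx' x's x'b by blast
  next
    case III
    define d where "d = y!0"
    have bd0: "b!0 \<le> d" using III vn[OF q0] unfolding d_def by simp
    have d1: "1 \<le> d" using bd0 b0 by simp
    have dp: "d \<le> int p" using y0p d_def by simp
    have bdj: "\<And>j. j < q \<Longrightarrow> b!j \<le> d" using bd[of 0] bd0 by fastforce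
    have a0q: "int q < a!0"
    proof (rule ccontr)
      assume "\<not> int q < a!0"
      then have "\<And>i. i < p \<Longrightarrow> a!i \<le> int q" using ad[of 0] by fastforce
      moreover have "\<And>j. j < q \<Longrightarrow> b!j \<le> int p" using bdj dp by fastforce
      ultimately have "(\<Sum>i<f. a!i) + (\<Sum>j<g. b!j) \<le> 2*int p*int q - 2*(int p - int f)*(int q - int g)"
        by (intro FU fg) auto
      then show False using H by linarith
    qed
    have ymono: "\<And>j j'. j \<le> j' \<Longrightarrow> j' < q \<Longrightarrow> y!j' \<le> y!j" unfolding y_def by (rule Yf_mono)
    define R where "R = {j. j < q \<and> y!j = d}"
    have finR: "finite R" unfolding R_def by simp
    have R0: "0 \<in> R" unfolding R_def d_def using q0 by simp
    define r where "r = Max R"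
    have rR: "r \<in> R" unfolding r_def using Max_in[OF finR] R0 by blast
    have rq: "r < q" and yr: "y!r = d" using rR unfolding R_def by auto
    have yafter: "\<And>j. r < j \<Longrightarrow> j < q \<Longrightarrow> y!j \<le> d - 1"
    proof -
      fix j assume "r < j" "j < q"
      have "y!j \<noteq> d"
      proof
        assume "y!j = d" then have "j \<in> R" unfolding R_def using \<open>j < q\<close> by simp
        then have "j \<le> r" unfolding r_def using Max_ge[OF finR] by simp
        then show False using \<open>r < j\<close> by simp
      qed
      moreover have "y!j \<le> d" using ymono[of 0 j] \<open>j < q\<close> d_def by simp
      ultimately show "y!j \<le> d - 1" by simp
    qed
    define e where "e = int q - int r - 1"
    have e0: "0 \<le> e" and eq1: "e \<le> int q - 1" unfolding e_def using rq by auto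
    define S where "S = {i. i < p \<and> x!i \<le> e}"
    have finS: "finite S" unfolding S_def by simp
    have cS: "int (card S) = d" using Yf_nth[OF rq, of p x] yr unfolding S_def e_def y_def by simp
    have Sne: "S \<noteq> {}" using cS d1 by auto
    define i0 where "i0 = Min S"
    have i0S: "i0 \<in> S" unfolding i0_def using Min_in[OF finS Sne] .
    have i0p: "i0 < p" and xi0: "x!i0 \<le> e" using i0S unfolding S_def by auto
    have xbef: "\<And>i. i < i0 \<Longrightarrow> e < x!i"
    proof -
      fix i assume "i < i0"
      show "e < x!i"
      proof (rule ccontr)
        assume "\<not> e < x!i"
        then have "i \<in> S" unfolding S_def using \<open>i < i0\<close> i0p by simp
        then have "i0 \<le> i" unfolding i0_def using Min_le[OF finS] by simp
        then show False using \<open>i < i0\<close> by simp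
      qed
    qed
    have xaft: "\<And>i. i0 \<le> i \<Longrightarrow> i < p \<Longrightarrow> x!i \<le> e" using xs xi0 by fastforce
    have Seq: "S = {i0..<p}"
    proof
      show "S \<subseteq> {i0..<p}"
      proof
        fix i assume "i \<in> S"
        then have "i < p" "i0 \<le> i" unfolding S_def i0_def using Min_le[OF finS] by auto
        then show "i \<in> {i0..<p}" by simp
      qed
      show "{i0..<p} \<subseteq> S" unfolding S_def using xaft by auto
    qed
    have dpi: "d = int p - int i0" using cS unfolding Seq using i0p by simp
    have xi0e: "x!i0 = e"
    proof (cases "Suc r < q")
      case True
      have y1: "y!(Suc r) \<le> d - 1" using yafter[of "Suc r"] True by simp
      have y1': "y!(Suc r) = int (card {i. i < p \<and> x!i \<le> int q - int (Suc r) - 1})"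
        unfolding y_def by (rule Yf_nth[OF True])
      show ?thesis
      proof (rule ccontr)
        assume "x!i0 \<noteq> e"
        then have "x!i0 \<le> e - 1" using xi0 by simp
        then have xi0': "x!i0 \<le> int q - int (Suc r) - 1" unfolding e_def by simp
        have "{i. i < p \<and> x!i \<le> int q - int (Suc r) - 1} = S"
        proof (rule set_eqI)
          fix i
          show "i \<in> {i. i < p \<and> x!i \<le> int q - int (Suc r) - 1} \<longleftrightarrow> i \<in> S"
          proof
            assume "i \<in> {i. i < p \<and> x!i \<le> int q - int (Suc r) - 1}"
            then have "i < p" "x!i \<le> e" unfolding e_def by auto
            then show "i \<in> S" unfolding S_def by simp
          next
            assume "i \<in> S"
            then have "i0 \<le> i" "i < p" unfolding Seq by auto
            then show "i \<in> {i. i < p \<and> x!i \<le> int q - int (Suc r) - 1}"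
              using xs[of i0 i] xi0' by simp
          qed
        qed
        then show False using y1 y1' cS by simp
      qed
    next
      case False
      then have "e = 0" unfolding e_def using rq by simp
      then show ?thesis using xi0 xb[OF i0p] by simp
    qed
    define x' where "x' = x[i0 := e + 1]"
    have lx': "length x' = p" unfolding x'_def using lx by simp
    have x'n: "\<And>i. x'!i = (if i = i0 then e + 1 else x!i)" unfolding x'_def using lx i0p by simp
    have x's: "\<forall>i j. i \<le> j \<longrightarrow> j < p \<longrightarrow> x'!j \<le> x'!i"
    proof (intro allI impI)
      fix i j assume ij: "i \<le> j" "j < p"
      show "x'!j \<le> x'!i"
      proof (cases "j = i0")
        case True
        show ?thesis
        proof (cases "i = i0")
          case False
          then have "i < i0" using ij True by simp
          then show ?thesis using x'n xbef[of i] True False by simp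
        qed (use True in simp)
      next
        case False
        show ?thesis
        proof (cases "i = i0")
          case True
          then have "i0 < j" using ij \<open>j \<noteq> i0\<close> by simp
          then show ?thesis using x'n xaft[of j] ij True False by simp
        next
          case False
          then show ?thesis using x'n xs[OF ij] \<open>j \<noteq> i0\<close> by simp
        qed
      qed
    qed
    have x'b: "\<forall>i<p. 0 \<le> x'!i \<and> x'!i \<le> int q"
      using x'n xb e0 eq1 by simp
    have Y': "Yf p q x' = y[r := d - 1]"
    proof (rule nth_equalityI)
      show "length (Yf p q x') = length (y[r := d - 1])" using ly by simp
      fix j assume "j < length (Yf p q x')"
      then have j: "j < q" by simp
      have "Yf p q x' ! j = y!j + (if e + 1 \<le> int q - int j - 1 then 1 else 0) - (if e \<le> int q - int j - 1 then 1 else 0)"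
        unfolding x'_def y_def using Yf_upd[OF i0p j lx] xi0e by simp
      also have "\<dots> = y!j - (if j = r then 1 else 0)" unfolding e_def by auto
      finally show "Yf p q x' ! j = y[r := d - 1] ! j" using ly j yr by (cases "j = r") simp_all
    qed
    have ublk: "blk (map2 (-) (a[0 := a!0 - 1]) x') < blk u"
    proof -
      have e1: "map2 (-) (a[0 := a!0 - 1]) x' = (u[0 := u!0 - 1])[i0 := (a[0 := a!0 - 1])!i0 - (e + 1)]"
        unfolding x'_def ua[symmetric] by (rule map2_upd_right) (use la lx i0p in auto)
      show ?thesis
      proof (cases "i0 = 0")
        case True
        have x0: "x!0 = e" using xi0e True by simp
        then have u2: "2 \<le> u!0" using un[OF p0] a0q eq1 by simp
        have "map2 (-) (a[0 := a!0 - 1]) x' = u[0 := u!0 - 2]"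
        proof -
          have h: "(a[0 := a!0 - 1])!i0 - (e + 1) = u!0 - 2" using True un[OF p0] x0 la p0 by simp
          show ?thesis unfolding e1 h using True by simp
        qed
        then show ?thesis using blk_dec2[of 0 u] lu p0 u2 by simp
      next
        case False
        have e2: "map2 (-) (a[0 := a!0 - 1]) x' = u[0 := u!0 - 1, i0 := u!i0 - 1]"
        proof -
          have h: "(a[0 := a!0 - 1])!i0 - (e + 1) = u!i0 - 1" using False un[OF i0p] xi0e by simp
          show ?thesis unfolding e1 by (simp only: h)
        qed
        have "1 \<le> u!i0 \<or> 2 \<le> u!0 + u!i0"
        proof (cases "1 \<le> u!i0")
          case False
          then have ai0: "a!i0 \<le> e" using un[OF i0p] xi0e by simp
          have a2q: "2 * int q + 1 \<le> a!0"
          proof (rule ccontr)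
            assume "\<not> 2 * int q + 1 \<le> a!0"
            then have "\<And>i. i < p \<Longrightarrow> a!i \<le> 2 * int q" using ad[of 0] by fastforce
            moreover have "\<And>i. i0 \<le> i \<Longrightarrow> i < p \<Longrightarrow> a!i \<le> e" using ad[of i0] ai0 by fastforce
            moreover have "\<And>j. j < q \<Longrightarrow> b!j \<le> int p - int i0" using bdj dpi by simp
            ultimately have "(\<Sum>i<f. a!i) + (\<Sum>j<g. b!j) \<le> 2*int p*int q - 2*(int p - int f)*(int q - int g)"
              by (intro F3[of f p g q i0 e] fg) (use i0p e0 eq1 in auto)
            then show False using H by linarith
          qed
          have "0 \<le> a!i0" using ann[OF i0p] .
          then show ?thesis using un[OF i0p] un[OF p0] xi0e a2q xb[OF p0] eq1 by simp
        qed simp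
        then show ?thesis unfolding e2 using blk_dec_two[of 0 u i0] lu p0 i0p False III by simp
      qed
    qed
    have vblk: "blk (map2 (-) (b[0 := b!0 - 1]) (Yf p q x')) \<le> blk v"
    proof -
      have e1: "map2 (-) (b[0 := b!0 - 1]) (Yf p q x') = (v[0 := v!0 - 1])[r := (b[0 := b!0 - 1])!r - (d - 1)]"
        unfolding Y' vb[symmetric] by (rule map2_upd_right) (use lb ly rq in auto)
      show ?thesis
      proof (cases "r = 0")
        case True
        have h: "(b[0 := b!0 - 1])!0 - (d - 1) = v!0" using vn[OF q0] d_def lb q0 by simp
        have "map2 (-) (b[0 := b!0 - 1]) (Yf p q x') = v"
          unfolding e1 True by (simp only: h list_update_overwrite list_update_id)
        then show ?thesis by simp
      next
        case False
        have h: "(b[0 := b!0 - 1])!r - (d - 1) = v!r + 1" using False vn[OF rq] yr by simp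
        have e2: "map2 (-) (b[0 := b!0 - 1]) (Yf p q x') = v[0 := v!0 - 1, r := v!r + 1]"
          unfolding e1 by (simp only: h)
        have "v!r \<le> v!0 - 1" using vn[OF rq] vn[OF q0] yr d_def b1[of r] False rq by simp
        then show ?thesis unfolding e2 by (intro blk_comp_weak) (use lv rq q0 False III in auto)
      qed
    qed
    have "blk (map2 (-) (a[0 := a!0 - 1]) x') + blk (map2 (-) (b[0 := b!0 - 1]) (Yf p q x'))
        < blk (map2 (-) a x) + blk (map2 (-) b (Yf p q x))"
      using ublk vblk unfolding u_def v_def y_def by simp
    then show ?thesis using lx' x's x'b by blast
  qed
qed


lemma Omega_eq: "Omega p q = (\<lambda>x. (x, Yf p q x)) ` {x. length x = p \<and> sorted_wrt (\<ge>) x \<and> (\<forall>v\<in>set x. 0 \<le> v \<and> v \<le> int q)}"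
  unfolding Omega_def Yf_def by auto

lemma Omega_fin: "finite (Omega p q)"
proof -
  have "{x. length x = p \<and> sorted_wrt (\<ge>) x \<and> (\<forall>v\<in>set x. 0 \<le> v \<and> v \<le> int q)} \<subseteq> {xs. set xs \<subseteq> {0..int q} \<and> length xs = p}"
    by auto
  moreover have "finite {xs. set xs \<subseteq> {0..int q} \<and> length xs = p}"
    by (rule finite_lists_length_eq) simp
  ultimately show ?thesis unfolding Omega_eq by (meson finite_imageI finite_subset)
qed

lemma Omega_ne: "Omega p q \<noteq> {}"
proof -
  have "replicate p 0 \<in> {x. length x = p \<and> sorted_wrt (\<ge>) x \<and> (\<forall>v\<in>set x. 0 \<le> v \<and> v \<le> int q)}"
    by (auto simp: sorted_wrt_iff_nth_less)
  then show ?thesis unfolding Omega_eq by blast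
qed

lemma sorted_nth:
  assumes "sorted_wrt (\<ge>) (xs :: int list)" "i \<le> j" "j < length xs"
  shows "xs!j \<le> xs!i"
  using assms unfolding sorted_wrt_iff_nth_less by (cases "i = j") auto

lemma beta_upd:
  fixes a :: "int list"
  assumes "length a = n" "1 \<le> n"
  shows "map2 (-) a (1 # replicate (n - 1) 0) = a[0 := a!0 - 1]"
proof (rule nth_equalityI)
  show "length (map2 (-) a (1 # replicate (n - 1) 0)) = length (a[0 := a!0 - 1])" using assms by simp
  fix i assume "i < length (map2 (-) a (1 # replicate (n - 1) 0))"
  then have i: "i < n" using assms by simp
  show "map2 (-) a (1 # replicate (n - 1) 0) ! i = a[0 := a!0 - 1] ! i"
  proof (cases i)
    case 0 then show ?thesis using assms by simp
  next
    case (Suc k) then show ?thesis using assms i by (simp add: nth_Cons)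
  qed
qed

theorem theorem1p1:
  fixes p q :: nat and a b :: "int list"
  assumes "1 \<le> p" and "p \<le> q"
    and "length a = p" and "length b = q"
    and "kdominant (a, b)"
    and "u_large p q (a, b)"
    and "kdominant (wminus (a, b) (beta p q))"
  shows "spin_norm p q (a, b) > spin_norm p q (wminus (a, b) (beta p q))"
proof -
  note p1 = assms(1) and pq = assms(2) and la = assms(3) and lb = assms(4)
  have q1: "1 \<le> q" using p1 pq by simp
  define a' where "a' = a[0 := a!0 - 1]"
  define b' where "b' = b[0 := b!0 - 1]"
  have wb: "wminus (a, b) (beta p q) = (a', b')"
    unfolding wminus_def beta_def a'_def b'_def using beta_upd[OF la p1] beta_upd[OF lb q1] by simp
  have kd: "sorted_wrt (\<ge>) a" "\<forall>v\<in>set a. 0 \<le> v" "sorted_wrt (\<ge>) b" "\<forall>v\<in>set b. 0 \<le> v"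
    using assms(5) unfolding kdominant_def by auto
  have kd': "sorted_wrt (\<ge>) a'" "\<forall>v\<in>set a'. 0 \<le> v" "sorted_wrt (\<ge>) b'" "\<forall>v\<in>set b'. 0 \<le> v"
    using assms(7) unfolding kdominant_def wb by auto
  have ad: "\<And>i j. i \<le> j \<Longrightarrow> j < p \<Longrightarrow> a!j \<le> a!i" using sorted_nth[OF kd(1)] la by simp
  have bd: "\<And>i j. i \<le> j \<Longrightarrow> j < q \<Longrightarrow> b!j \<le> b!i" using sorted_nth[OF kd(3)] lb by simp
  have ann: "\<And>i. i < p \<Longrightarrow> 0 \<le> a!i" using kd(2) la nth_mem by blast
  have bnn: "\<And>j. j < q \<Longrightarrow> 0 \<le> b!j" using kd(4) lb nth_mem by blast
  have la': "length a' = p" and lb': "length b' = q" unfolding a'_def b'_def using la lb by auto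
  have a'0: "a'!0 = a!0 - 1" unfolding a'_def using la p1 by simp
  have b'0: "b'!0 = b!0 - 1" unfolding b'_def using lb q1 by simp
  have a0: "1 \<le> a!0"
  proof -
    have "a'!0 \<in> set a'" using la' p1 by simp
    then show ?thesis using kd'(2) a'0 by fastforce
  qed
  have b0: "1 \<le> b!0"
  proof -
    have "b'!0 \<in> set b'" using lb' q1 by simp
    then show ?thesis using kd'(4) b'0 by fastforce
  qed
  have a1: "\<And>i. 1 \<le> i \<Longrightarrow> i < p \<Longrightarrow> a!i \<le> a!0 - 1"
  proof -
    fix i assume "1 \<le> i" "i < p"
    then have "a'!i \<le> a'!0" using sorted_nth[OF kd'(1), of 0 i] la' by simp
    then show "a!i \<le> a!0 - 1" using a'0 \<open>1 \<le> i\<close> unfolding a'_def by simp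
  qed
  have b1: "\<And>j. 1 \<le> j \<Longrightarrow> j < q \<Longrightarrow> b!j \<le> b!0 - 1"
  proof -
    fix j assume "1 \<le> j" "j < q"
    then have "b'!j \<le> b'!0" using sorted_nth[OF kd'(3), of 0 j] lb' by simp
    then show "b!j \<le> b!0 - 1" using b'0 \<open>1 \<le> j\<close> unfolding b'_def by simp
  qed
  have UL: "\<exists>f\<le>p. \<exists>g\<le>q. (\<Sum>i<f. a!i) + (\<Sum>j<g. b!j) > 2*int p*int q - 2*(int p - int f)*(int q - int g)"
  proof -
    obtain f g where fg: "f \<le> p" "g \<le> q"
      and H: "sum_list (take f a) + sum_list (take g b) > 2 * int p * int q - 2 * (int p - int f) * (int q - int g)"
      using assms(6) unfolding u_large_def by auto
    have "sum_list (take f a) = (\<Sum>i<f. a!i)"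
      using fg(1) la by (simp add: sum_list_sum_nth atLeast0LessThan min_def)
    moreover have "sum_list (take g b) = (\<Sum>j<g. b!j)"
      using fg(2) lb by (simp add: sum_list_sum_nth atLeast0LessThan min_def)
    ultimately show ?thesis using fg H by auto
  qed
  let ?F = "\<lambda>\<nu>. (\<lambda>\<tau>. knorm p q (wminus \<nu> \<tau>)) ` Omega p q"
  have finF: "\<And>\<nu>. finite (?F \<nu>)" using Omega_fin by simp
  have neF: "\<And>\<nu>. ?F \<nu> \<noteq> {}" using Omega_ne by simp
  obtain \<tau> where \<tau>: "\<tau> \<in> Omega p q" and sp: "spin_norm p q (a, b) = knorm p q (wminus (a, b) \<tau>)"
    using Min_in[OF finF neF, of "(a,b)"] unfolding spin_norm_def by auto
  obtain x where tx: "\<tau> = (x, Yf p q x)" and lx: "length x = p" and xsrt: "sorted_wrt (\<ge>) x"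
    and xset: "\<forall>v\<in>set x. 0 \<le> v \<and> v \<le> int q"
    using \<tau> unfolding Omega_eq by auto
  have xs: "\<And>i j. i \<le> j \<Longrightarrow> j < p \<Longrightarrow> x!j \<le> x!i" using sorted_nth[OF xsrt] lx by simp
  have xb: "\<And>i. i < p \<Longrightarrow> 0 \<le> x!i \<and> x!i \<le> int q" using xset lx nth_mem by blast
  obtain x' where lx': "length x' = p" and x's: "\<forall>i j. i \<le> j \<longrightarrow> j < p \<longrightarrow> x'!j \<le> x'!i"
    and x'b: "\<forall>i<p. 0 \<le> x'!i \<and> x'!i \<le> int q"
    and lt: "blk (map2 (-) (a[0 := a!0 - 1]) x') + blk (map2 (-) (b[0 := b!0 - 1]) (Yf p q x'))
     < blk (map2 (-) a x) + blk (map2 (-) b (Yf p q x))"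
    using main_step[OF p1 pq la lb ad bd bnn ann a0 b0 a1 b1 UL lx xs xb] by blast
  have \<tau>': "(x', Yf p q x') \<in> Omega p q"
  proof -
    have "sorted_wrt (\<ge>) x'" unfolding sorted_wrt_iff_nth_less using x's lx' by auto
    moreover have "\<forall>v\<in>set x'. 0 \<le> v \<and> v \<le> int q" using x'b lx' by (auto simp: in_set_conv_nth)
    ultimately show ?thesis unfolding Omega_eq using lx' by blast
  qed
  have "spin_norm p q (wminus (a, b) (beta p q)) \<le> knorm p q (wminus (a', b') (x', Yf p q x'))"
    unfolding spin_norm_def wb using Min_le[OF finF] \<tau>' by blast
  also have "\<dots> = sqrt (real_of_int (blk (map2 (-) a' x') + blk (map2 (-) b' (Yf p q x'))))"
    by (subst knorm_blk[of _ p q]) (use la' lb' lx' in \<open>simp_all add: wminus_def\<close>)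
  also have "\<dots> < sqrt (real_of_int (blk (map2 (-) a x) + blk (map2 (-) b (Yf p q x))))"
    using lt unfolding a'_def b'_def by simp
  also have "\<dots> = knorm p q (wminus (a, b) \<tau>)"
    by (subst knorm_blk[of _ p q]) (use la lb lx tx in \<open>simp_all add: wminus_def\<close>)
  also have "\<dots> = spin_norm p q (a, b)" using sp by simp
  finally show ?thesis .
qed

end
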